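(* Let $m\ge 1$, $P,Q\ge 0$ be integers with $N=P+Q\ge1$, let $D$, $F_1,\ldots,F_m$, $\mathcal{E}$, $d$ and $G_F:\mathcal{E}\to\mathcal{E}$ be as described in the context, and assume that the state network of $G_F$ is strongly connected. Then $G_F$ is topologically transitive on $(\mathcal{E},d)$: for any nonempty open sets $U',U''\subseteq\mathcal{E}$ there exists $n_0>0$ with $G_F^{n_0}(U')\cap U''\neq\varnothing$.
   Context: Let $D=\{k\,2^{-Q}: k=0,1,\ldots,2^N-1\}$ be the set of $N$-bit fixed-point numbers; each $x\in D$ is written in binary as $x=x_{P-1}x_{P-2}\ldots x_0.x_{-1}\ldots x_{-Q}$ with digits $x_j\in\{0,1\}$. For $x,y\in D$ let $x\cdot y$, $x+y$ and $\overline{x}$ denote bitwise AND, bitwise OR and bitwise NOT (complement of every one of the $N$ digits), which are again elements of $D$. Let $F_1,\ldots,F_m:D^m\to D$ be arbitrary functions. Let $\Sigma$ be the set of one-sided infinite sequences $w=w^1w^2\ldots$ with $w^k\in D$, and $\sigma:\Sigma\to\Sigma$ the left shift $\sigma(w)=w^2w^3\ldots$. Let $\mathcal{E}=\Sigma^m\times D^m$, with elements $E=((w_1,\ldots,w_m),(x_1,\ldots,x_m))$. Define $G_F:\mathcal{E}\to\mathcal{E}$ by $G_F((w_1,\ldots,w_m),x)=((\sigma(w_1),\ldots,\sigma(w_m)),(H_1,\ldots,H_m))$, where $x=(x_1,\ldots,x_m)$ and $H_i=(x_i\cdot\overline{w_i^1})+(F_i(x)\cdot w_i^1)$ (i.e.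 bit $j$ of $x_i$ is replaced by bit $j$ of $F_i(x)$ exactly when bit $j$ of $w_i^1$ is $1$). The metric on $\mathcal{E}$ is $d(E,\hat E)=\sum_{i=1}^m\sum_{k=1}^\infty \frac{|w_i^k-\hat w_i^k|}{2^{Nk}}+\sqrt{\sum_{i=1}^m (x_i-\hat x_i)^2}$. The state network of $G_F$ is the directed graph whose vertex set is $D^m$, with an edge from $\hat x$ to $\tilde x$ whenever there is some $(w_1,\ldots,w_m)\in\Sigma^m$ such that the $D^m$-component of $G_F((w_1,\ldots,w_m),\hat x)$ equals $\tilde x$. It is strongly connected if every vertex is reachable from every other vertex by a directed path. *)

theory Defs
  imports "HOL-Analysis.Analysis"
begin

definition fxD :: "nat \<Rightarrow> nat \<Rightarrow> real set" where
  "fxD N Q = {real k / 2 ^ Q | k. k < 2 ^ N}"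

text \<open>The integer k with x = k 2^-Q (the binary digits of k are the digits of x).\<close>
definition fxcode :: "nat \<Rightarrow> real \<Rightarrow> nat" where
  "fxcode Q x = nat \<lfloor>x * 2 ^ Q\<rfloor>"

definition fxval :: "nat \<Rightarrow> nat \<Rightarrow> real" where
  "fxval Q k = real k / 2 ^ Q"

definition fxand :: "nat \<Rightarrow> real \<Rightarrow> real \<Rightarrow> real" where
  "fxand Q x y = fxval Q (and (fxcode Q x) (fxcode Q y))"

definition fxor :: "nat \<Rightarrow> real \<Rightarrow> real \<Rightarrow> real" where
  "fxor Q x y = fxval Q (or (fxcode Q x) (fxcode Q y))"

definition fxnot :: "nat \<Rightarrow> nat \<Rightarrow> real \<Rightarrow> real" where
  "fxnot N Q x = fxval Q (2 ^ N - 1 - fxcode Q x)"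

text \<open>Points of the phase space: (W, X) with W a list of m sequences
  (sequence index 0 corresponds to w^1) and X a list of m elements of D.\<close>
definition phase_space :: "nat \<Rightarrow> nat \<Rightarrow> nat \<Rightarrow> ((nat \<Rightarrow> real) list \<times> real list) set" where
  "phase_space m N Q = {(W, X). length W = m \<and> length X = m \<and>
      (\<forall>i<m. \<forall>k. (W ! i) k \<in> fxD N Q) \<and> (\<forall>i<m. X ! i \<in> fxD N Q)}"

definition state_space :: "nat \<Rightarrow> nat \<Rightarrow> nat \<Rightarrow> real list set" where
  "state_space m N Q = {X. length X = m \<and> (\<forall>i<m. X ! i \<in> fxD N Q)}"

text \<open>The metric d; the k-th term (k \<ge> 1) has weight 2^(-N k); index k here is k+1 there.\<close>
definition dist_E :: "nat \<Rightarrow> nat \<Rightarrow> ((nat \<Rightarrow> real) list \<times> real list) \<Rightarrow>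
    ((nat \<Rightarrow> real) list \<times> real list) \<Rightarrow> real" where
  "dist_E m N E E' =
     (\<Sum>i<m. (\<Sum>k. \<bar>(fst E ! i) k - (fst E' ! i) k\<bar> / 2 ^ (N * (k + 1))))
     + sqrt (\<Sum>i<m. (snd E ! i - snd E' ! i)\<^sup>2)"

definition metric_open :: "'a set \<Rightarrow> ('a \<Rightarrow> 'a \<Rightarrow> real) \<Rightarrow> 'a set \<Rightarrow> bool" where
  "metric_open S d U \<longleftrightarrow> U \<subseteq> S \<and>
     (\<forall>x\<in>U. \<exists>e>0. \<forall>y\<in>S. d x y < e \<longrightarrow> y \<in> U)"

definition G_F :: "nat \<Rightarrow> nat \<Rightarrow> nat \<Rightarrow> (nat \<Rightarrow> real list \<Rightarrow> real) \<Rightarrow>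
    ((nat \<Rightarrow> real) list \<times> real list) \<Rightarrow> ((nat \<Rightarrow> real) list \<times> real list)" where
  "G_F m N Q F E =
     (map (\<lambda>w k. w (Suc k)) (fst E),
      map (\<lambda>i. fxor Q (fxand Q (snd E ! i) (fxnot N Q ((fst E ! i) 0)))
                       (fxand Q (F i (snd E)) ((fst E ! i) 0))) [0..<m])"

definition state_edges :: "nat \<Rightarrow> nat \<Rightarrow> nat \<Rightarrow> (nat \<Rightarrow> real list \<Rightarrow> real) \<Rightarrow> (real list \<times> real list) set" where
  "state_edges m N Q F = {(x, y). x \<in> state_space m N Q \<and> y \<in> state_space m N Q \<and>
     (\<exists>W. length W = m \<and> (\<forall>i<m. \<forall>k. (W ! i) k \<in> fxD N Q) \<and> snd (G_F m N Q F (W, x)) = y)}"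

definition strongly_connected_net :: "nat \<Rightarrow> nat \<Rightarrow> nat \<Rightarrow> (nat \<Rightarrow> real list \<Rightarrow> real) \<Rightarrow> bool" where
  "strongly_connected_net m N Q F \<longleftrightarrow>
     (\<forall>x\<in>state_space m N Q. \<forall>y\<in>state_space m N Q. (x, y) \<in> (state_edges m N Q F)\<^sup>*)"

end

theory Submission
  imports Defs
begin

lemma and_lt: "(x::nat) < 2^N \<Longrightarrow> and x y < 2^N"
proof -
  assume "x < 2^N"
  hence tx: "take_bit N x = x" by (simp add: take_bit_nat_eq_self_iff)
  have b: "bit x n \<Longrightarrow> n < N" for n using tx by (metis bit_take_bit_iff)
  have "take_bit N (and x y) = and x y"
    using b by (auto simp: bit_eq_iff bit_take_bit_iff bit_and_iff)
  thus ?thesis using take_bit_nat_eq_self_iff by blast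
qed
lemma or_lt: "(x::nat) < 2^N \<Longrightarrow> y < 2^N \<Longrightarrow> or x y < 2^N"
proof -
  assume "x < 2^N" "y < 2^N"
  hence "take_bit N x = x" "take_bit N y = y" by (simp_all add: take_bit_nat_eq_self_iff)
  hence "take_bit N (or x y) = or x y" by (simp only: take_bit_or)
  thus ?thesis using take_bit_nat_eq_self_iff by blast
qed

lemma fxcode_val[simp]: "fxcode Q (fxval Q k) = k"
  by (simp add: fxcode_def fxval_def)

lemma fxD_iff: "x \<in> fxD N Q \<longleftrightarrow> (\<exists>k<2^N. x = fxval Q k)"
  by (auto simp: fxD_def fxval_def)

lemma code_lt: "x \<in> fxD N Q \<Longrightarrow> fxcode Q x < 2^N"
  by (auto simp: fxD_iff)

lemma fxand_D: "x \<in> fxD N Q \<Longrightarrow> fxand Q x y \<in> fxD N Q"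
proof -
  assume a: "x \<in> fxD N Q"
  have "and (fxcode Q x) (fxcode Q y) < 2^N" using and_lt code_lt[OF a(1)] by blast
  thus ?thesis unfolding fxand_def fxD_iff by blast
qed

lemma fxor_D: "x \<in> fxD N Q \<Longrightarrow> y \<in> fxD N Q \<Longrightarrow> fxor Q x y \<in> fxD N Q"
proof -
  assume a: "x \<in> fxD N Q" "y \<in> fxD N Q"
  have "or (fxcode Q x) (fxcode Q y) < 2^N" using or_lt code_lt[OF a(1)] code_lt[OF a(2)] by blast
  thus ?thesis unfolding fxor_def fxD_iff by blast
qed

lemma fxD_bound: "x \<in> fxD N Q \<Longrightarrow> 0 \<le> x \<and> x \<le> 2^N"
proof -
  assume "x \<in> fxD N Q"
  then obtain k where k: "k < (2::nat)^N" "x = real k / 2^Q" by (auto simp: fxD_def)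
  have "real k \<le> real k * 2^Q" by (simp add: mult_le_cancel_left1)
  hence "real k / 2^Q \<le> real k" by (simp add: divide_le_eq)
  moreover have "real k < real ((2::nat)^N)" using k(1) by (simp only: of_nat_less_iff)
  moreover have "real ((2::nat)^N) = (2::real)^N" by simp
  moreover have "0 \<le> real k / 2^Q" by simp
  ultimately show ?thesis using k(2) by linarith
qed

lemma G_phase:
  assumes "E \<in> phase_space m N Q" "\<forall>i<m. \<forall>x\<in>state_space m N Q. F i x \<in> fxD N Q"
  shows "G_F m N Q F E \<in> phase_space m N Q"
proof -
  obtain W X where E: "E = (W, X)" by (cases E)
  have X: "X \<in> state_space m N Q" using assms(1) E by (auto simp: phase_space_def state_space_def)
  show ?thesis using assms(1) E X assms(2)
    by (auto simp: phase_space_def G_F_def intro!: fxor_D fxand_D)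
qed

lemma Gn_phase:
  assumes "E \<in> phase_space m N Q" "\<forall>i<m. \<forall>x\<in>state_space m N Q. F i x \<in> fxD N Q"
  shows "(G_F m N Q F ^^ n) E \<in> phase_space m N Q"
  by (induction n) (auto simp: assms G_phase)

lemma Gn_fst: "fst ((G_F m N Q F ^^ n) E) = map (\<lambda>w k. w (k + n)) (fst E)"
  by (induction n) (auto simp: G_F_def o_def)

lemma G_snd:
  assumes "length W = m" "length W' = m" "\<forall>i<m. (W!i) 0 = (W'!i) 0"
  shows "snd (G_F m N Q F (W, X)) = snd (G_F m N Q F (W', X))"
  using assms by (auto simp: G_F_def)

lemma Gn_snd:
  assumes "length W = m" "length W' = m" "\<forall>i<m. \<forall>k<n. (W!i) k = (W'!i) k"
  shows "snd ((G_F m N Q F ^^ n) (W, X)) = snd ((G_F m N Q F ^^ n) (W', X))"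
  using assms
proof (induction n arbitrary: W W' X)
  case 0
  then show ?case by simp
next
  case (Suc n)
  let ?G = "G_F m N Q F"
  have e1: "?G (W, X) = (map (\<lambda>w k. w (Suc k)) W, snd (?G (W, X)))" by (simp add: G_F_def)
  have e2: "?G (W', X) = (map (\<lambda>w k. w (Suc k)) W', snd (?G (W, X)))"
    using G_snd[of W m W' N Q F X] Suc.prems by (simp add: G_F_def)
  have IH: "snd ((?G ^^ n) (map (\<lambda>w k. w (Suc k)) W, snd (?G (W, X)))) =
            snd ((?G ^^ n) (map (\<lambda>w k. w (Suc k)) W', snd (?G (W, X))))"
    using Suc.prems by (intro Suc.IH) auto
  show ?case unfolding funpow_Suc_right o_def using e1 e2 IH by metis
qed

lemma reach:
  assumes "(x, y) \<in> (state_edges m N Q F)\<^sup>*"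
    and "length W2 = m" "\<forall>i<m. \<forall>k. (W2 ! i) k \<in> fxD N Q"
  shows "\<exists>n W. length W = m \<and> (\<forall>i<m. \<forall>k. (W ! i) k \<in> fxD N Q) \<and>
            (G_F m N Q F ^^ n) (W, x) = (W2, y)"
  using assms(1)
proof (induction rule: converse_rtrancl_induct)
  case base
  then show ?case using assms(2,3) by (intro exI[of _ 0] exI[of _ W2]) auto
next
  case (step a z)
  let ?G = "G_F m N Q F"
  obtain Wa where Wa: "length Wa = m" "\<forall>i<m. \<forall>k. (Wa ! i) k \<in> fxD N Q" "snd (?G (Wa, a)) = z"
    using step.hyps(1) by (auto simp: state_edges_def)
  obtain n W' where W': "length W' = m" "\<forall>i<m. \<forall>k. (W' ! i) k \<in> fxD N Q"
      "(?G ^^ n) (W', z) = (W2, y)" using step.IH by blast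
  define W where "W = map (\<lambda>i k. if k = 0 then (Wa!i) 0 else (W'!i) (k - 1)) [0..<m]"
  have lW: "length W = m" by (simp add: W_def)
  have vW: "\<forall>i<m. \<forall>k. (W ! i) k \<in> fxD N Q" using Wa W' by (simp add: W_def)
  have f: "map (\<lambda>w k. w (Suc k)) W = W'"
    by (rule nth_equalityI) (auto simp: W_def W'(1))
  have s: "snd (?G (W, a)) = z"
    using G_snd[of W m Wa N Q F a] lW Wa by (simp add: W_def)
  have "?G (W, a) = (W', z)" using f s by (simp add: G_F_def)
  hence "(?G ^^ Suc n) (W, a) = (W2, y)" using W'(3) unfolding funpow_Suc_right o_apply by simp
  then show ?case using lW vW by blast
qed

lemma tail_sum:
  fixes f :: "nat \<Rightarrow> real"
  assumes "\<forall>k. \<bar>f k\<bar> \<le> c" "\<forall>k<k0. f k = 0" "N \<ge> 1"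
  shows "(\<Sum>k. \<bar>f k\<bar> / 2 ^ (N * (k + 1))) \<le> c * (1/2)^k0"
proof -
  define g where "g k = \<bar>f k\<bar> / 2 ^ (N * (k + 1))" for k
  have c0: "c \<ge> 0" using assms(1) by (meson abs_ge_zero order.trans)
  have gb: "g k \<le> c * (1/2)^k" for k
  proof -
    have "(2::real)^k \<le> 2^(N*(k+1))" by (rule power_increasing) (use mult_le_mono1[OF assms(3), of "k+1"] in auto)
    hence "g k \<le> c / 2^k" unfolding g_def using assms(1)
      by (intro frac_le) auto
    moreover have "c / 2^k = c * (1/2)^k" by (simp add: power_one_over)
    ultimately show ?thesis by simp
  qed
  have g0: "g k \<ge> 0" for k by (simp add: g_def)
  have sg: "summable g"
    by (rule summable_comparison_test[of _ "\<lambda>k. c * (1/2)^k"])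
       (use gb g0 in \<open>auto intro!: summable_mult summable_geometric\<close>)
  have "suminf g = (\<Sum>k. g (k + k0)) + sum g {..<k0}"
    by (rule suminf_split_initial_segment[OF sg])
  also have "sum g {..<k0} = 0" using assms(2) by (simp add: g_def)
  finally have eq: "suminf g = (\<Sum>k. g (k + k0))" by simp
  have gb2: "g (k + k0) \<le> (c * (1/2)^k0 / 2) * (1/2)^k" for k
  proof -
    have "(2::real)^(k+k0+1) \<le> 2^(N*(k+k0+1))" by (rule power_increasing) (use mult_le_mono1[OF assms(3), of "k+k0+1"] in auto)
    hence "g (k+k0) \<le> c / 2^(k+k0+1)" unfolding g_def using assms(1)
      by (intro frac_le) (auto simp: add.assoc)
    also have "c / 2^(k+k0+1) = (c * (1/2)^k0 / 2) * (1/2)^k"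
      by (simp add: power_one_over power_add mult_ac)
    finally show ?thesis .
  qed
  have "(\<Sum>k. g (k + k0)) \<le> (\<Sum>k. (c * (1/2)^k0 / 2) * (1/2)^k)"
    by (rule suminf_le) (use gb2 sg summable_iff_shift[of g k0] in \<open>auto intro!: summable_mult summable_geometric\<close>)
  also have "\<dots> = (c * (1/2)^k0 / 2) * (\<Sum>k. (1/2::real)^k)"
    by (rule suminf_mult) (auto intro!: summable_geometric)
  also have "\<dots> = c * (1/2)^k0" by (simp add: suminf_geometric)
  finally have "(\<Sum>k. g (k + k0)) \<le> c * (1/2)^k0" .
  with eq have "suminf g \<le> c * (1/2)^k0" by linarith
  thus ?thesis unfolding g_def[abs_def] .
qed

theorem theorem2:
  fixes m P Q N :: nat and F :: "nat \<Rightarrow> real list \<Rightarrow> real"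
  assumes "m \<ge> 1" and "N = P + Q" and "N \<ge> 1"
    and "\<forall>i<m. \<forall>x\<in>state_space m N Q. F i x \<in> fxD N Q"
    and "strongly_connected_net m N Q F"
  shows "\<forall>U1 U2. metric_open (phase_space m N Q) (dist_E m N) U1 \<and> U1 \<noteq> {} \<and>
            metric_open (phase_space m N Q) (dist_E m N) U2 \<and> U2 \<noteq> {} \<longrightarrow>
            (\<exists>n0>0. (G_F m N Q F ^^ n0) ` U1 \<inter> U2 \<noteq> {})"
proof (intro allI impI)
  fix U1 U2
  assume H: "metric_open (phase_space m N Q) (dist_E m N) U1 \<and> U1 \<noteq> {} \<and>
            metric_open (phase_space m N Q) (dist_E m N) U2 \<and> U2 \<noteq> {}"
  let ?G = "G_F m N Q F"
  let ?S = "phase_space m N Q"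
  obtain W1 X1 where E1: "(W1, X1) \<in> U1" using H by auto
  obtain W2 X2 where E2: "(W2, X2) \<in> U2" using H by auto
  have E1S: "(W1, X1) \<in> ?S" and E2S: "(W2, X2) \<in> ?S"
    using H E1 E2 by (auto simp: metric_open_def)
  obtain e where e: "e > 0" "\<forall>y\<in>?S. dist_E m N (W1, X1) y < e \<longrightarrow> y \<in> U1"
    using H E1 unfolding metric_open_def by blast
  define c :: real where "c = 2^N"
  have "\<exists>n. (1/2::real)^n < e / (real m * c + 1)"
    by (rule real_arch_pow_inv) (use e in \<open>auto simp: c_def intro!: divide_pos_pos add_nonneg_pos\<close>)
  then obtain n where n: "(1/2::real)^n < e / (real m * c + 1)" by blast
  define k0 where "k0 = Suc n"
  have mc: "real m * c * (1/2)^k0 < e"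
  proof -
    have pos: "real m * c + 1 > 0" by (simp add: c_def add_nonneg_pos)
    have "real m * c * (1/2)^k0 \<le> (real m * c + 1) * (1/2)^n"
      by (rule mult_mono) (auto simp: k0_def c_def power_le_imp_le_exp intro: power_decreasing)
    also have "\<dots> < e" using n pos by (simp add: field_simps)
    finally show ?thesis .
  qed
  define x' where "x' = snd ((?G ^^ k0) (W1, X1))"
  have x'S: "x' \<in> state_space m N Q"
    using Gn_phase[OF E1S assms(4), of k0]
    by (cases "(?G ^^ k0) (W1, X1)") (auto simp: x'_def phase_space_def state_space_def)
  have X2S: "X2 \<in> state_space m N Q" using E2S by (auto simp: phase_space_def state_space_def)
  have W2v: "length W2 = m" "\<forall>i<m. \<forall>k. (W2 ! i) k \<in> fxD N Q" using E2S by (auto simp: phase_space_def)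
  have W1v: "length W1 = m" "\<forall>i<m. \<forall>k. (W1 ! i) k \<in> fxD N Q" and X1S: "X1 \<in> state_space m N Q"
    using E1S by (auto simp: phase_space_def state_space_def)
  have "(x', X2) \<in> (state_edges m N Q F)\<^sup>*"
    using assms(5) x'S X2S by (auto simp: strongly_connected_net_def)
  then obtain n1 W0 where W0: "length W0 = m" "\<forall>i<m. \<forall>k. (W0 ! i) k \<in> fxD N Q"
      "(?G ^^ n1) (W0, x') = (W2, X2)" using reach[OF _ W2v] by blast
  define W where "W = map (\<lambda>i k. if k < k0 then (W1!i) k else (W0!i) (k - k0)) [0..<m]"
  have lW: "length W = m" by (simp add: W_def)
  have vW: "\<forall>i<m. \<forall>k. (W ! i) k \<in> fxD N Q" using W1v W0 by (simp add: W_def)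
  have f: "fst ((?G ^^ k0) (W, X1)) = W0"
    unfolding Gn_fst by (rule nth_equalityI) (auto simp: W_def W0(1))
  have s: "snd ((?G ^^ k0) (W, X1)) = x'"
    unfolding x'_def by (rule Gn_snd) (auto simp: lW W1v W_def)
  have "(?G ^^ k0) (W, X1) = (W0, x')" using f s by (metis prod.collapse)
  hence img: "(?G ^^ (n1 + k0)) (W, X1) = (W2, X2)" using W0(3) by (simp add: funpow_add)
  have ES: "(W, X1) \<in> ?S" using lW vW X1S by (auto simp: phase_space_def state_space_def)
  have "dist_E m N (W1, X1) (W, X1) = (\<Sum>i<m. (\<Sum>k. \<bar>(W1 ! i) k - (W ! i) k\<bar> / 2 ^ (N * (k + 1))))"
    by (simp add: dist_E_def)
  also have "\<dots> \<le> (\<Sum>i<m. c * (1/2)^k0)"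
  proof (rule sum_mono)
    fix i assume "i \<in> {..<m}"
    hence i: "i < m" by simp
    show "(\<Sum>k. \<bar>(W1 ! i) k - (W ! i) k\<bar> / 2 ^ (N * (k + 1))) \<le> c * (1/2)^k0"
    proof (rule tail_sum)
      show "\<forall>k. \<bar>(W1 ! i) k - (W ! i) k\<bar> \<le> c"
      proof
        fix k
        have "0 \<le> (W1 ! i) k \<and> (W1 ! i) k \<le> 2^N" "0 \<le> (W ! i) k \<and> (W ! i) k \<le> 2^N"
          using fxD_bound W1v(2) vW i by blast+
        thus "\<bar>(W1 ! i) k - (W ! i) k\<bar> \<le> c" by (auto simp: c_def abs_le_iff)
      qed
      show "\<forall>k<k0. (W1 ! i) k - (W ! i) k = 0" using i by (simp add: W_def)
      show "N \<ge> 1" by fact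
    qed
  qed
  also have "\<dots> = real m * c * (1/2)^k0" by simp
  also have "\<dots> < e" by (rule mc)
  finally have "(W, X1) \<in> U1" using e(2) ES by blast
  hence "(W2, X2) \<in> (?G ^^ (n1 + k0)) ` U1 \<inter> U2" using img E2 by (metis IntI image_eqI)
  moreover have "n1 + k0 > 0" by (simp add: k0_def)
  ultimately show "\<exists>n0>0. (?G ^^ n0) ` U1 \<inter> U2 \<noteq> {}" by blast
qed

end
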